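(* Define periodic sequences $K_j\in\{0,1\}^{\mathbb N}$ by: $K_1=111\dots$ (repeating block $B_1=1$), and for $j\ge1$, $K_{j+1}$ is the periodic sequence with repeating block $B_{j+1}$ of length $2^{j}$ obtained by writing $B_j$ twice and replacing the last symbol by its complement ($0\leftrightarrow1$). Let $K_\infty=\lim_{j\to\infty}K_j$ (each $B_j$ is a prefix of $B_{j+1}$). For a sequence $s=s_1s_2\dots$ let $\tau(s)=\sum_{k\ge1}t_k2^{-k}$ with $t_k=\sum_{i=1}^k s_i\pmod 2$, and write $\tau_\infty=\tau(K_\infty)=0.t_1t_2t_3\dots$ (binary expansion given by these digits $t_k$). For an integer $p\ge1$ with binary expansion $p=\sum_{i\ge0}n_i2^i$, $n_i\in\{0,1\}$, set $s(p)=\sum_{i\ge0}n_i\pmod 2$. Then $t_k=s(p)$ whenever $k=p\cdot2^\ell$ with $\ell\ge0$ and $p\ge1$ odd.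
   Context: Thus $K_2=\overline{10}$, $K_3=\overline{1011}$, $K_4=\overline{10111010}$, and $K_\infty=1011\,1010\,1011\,1011\dots$; $K_\infty$ is also the fixed point beginning with $1$ of the substitution $1\mapsto10$, $0\mapsto11$. *)

theory Defs
  imports Main
begin

text \<open>Repeating blocks. blk j is the paper's block B_(j+1); symbols are 0/1 naturals.
  B_1 = [1]; B_(j+1) = B_j written twice with the last symbol complemented.\<close>
primrec blk :: "nat \<Rightarrow> nat list" where
  "blk 0 = [1]"
| "blk (Suc j) = blk j @ butlast (blk j) @ [1 - last (blk j)]"

text \<open>The periodic sequence K_(j+1), indexed from 1: K_(j+1)(i) = i-th symbol of the periodic
  repetition of the block.\<close>
definition Kseq :: "nat \<Rightarrow> nat \<Rightarrow> nat" where
  "Kseq j i = blk j ! ((i - 1) mod length (blk j))"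

definition Kinf :: "nat \<Rightarrow> nat" where
  "Kinf i = (THE c. \<forall>\<^sub>F j in sequentially. Kseq j i = c)"

definition tdig :: "nat \<Rightarrow> nat" where
  "tdig k = (\<Sum>i=1..k. Kinf i) mod 2"

fun bitsum :: "nat \<Rightarrow> nat" where
  "bitsum n = (if n = 0 then 0 else n mod 2 + bitsum (n div 2))"

definition sfun :: "nat \<Rightarrow> nat" where
  "sfun p = bitsum p mod 2"

end

theory Submission
  imports Defs
begin

function g :: "nat \<Rightarrow> nat" where
  "g n = (if even n then 1 else 1 - g (n div 2))"
  by auto
termination by (relation "measure id") (auto elim: oddE)
declare g.simps[simp del]

lemma g_even: "even n \<Longrightarrow> g n = 1"
  by (subst g.simps) simp

lemma g_odd: "g (2*q+1) = 1 - g q"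
  by (subst g.simps) simp

lemma g_le1: "g n \<le> 1"
  by (subst g.simps) auto

lemma len_blk[simp]: "length (blk j) = 2 ^ j"
  by (induction j) auto

lemma blk_ne[simp]: "blk j \<noteq> []"
  using len_blk[of j] by (metis list.size(3) power_not_zero zero_neq_numeral)

lemma g_per: "m + 1 < 2 ^ j \<Longrightarrow> g (m + 2 ^ j) = g m"
proof (induction j arbitrary: m)
  case 0 then show ?case by simp
next
  case (Suc j)
  show ?case
  proof (cases "even m")
    case True then show ?thesis by (simp add: g_even)
  next
    case False
    then obtain q where q: "m = 2*q+1" by (metis oddE)
    have "m + 2 ^ Suc j = 2*(q + 2 ^ j) + 1" using q by simp
    moreover have "q + 1 < 2 ^ j" using Suc.prems q by simp
    ultimately show ?thesis using Suc.IH[of q] q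
      by (simp only: g_odd)
  qed
qed

lemma blk_g: "n < 2 ^ j \<Longrightarrow> blk j ! n = g n"
proof (induction j arbitrary: n)
  case 0 then show ?case by (simp add: g_even)
next
  case (Suc j)
  have L: "last (blk j) = g (2^j - 1)"
    using Suc.IH[of "2^j - 1"] by (simp add: last_conv_nth)
  consider "n < 2^j" | "2^j \<le> n" "n + 1 < 2^Suc j" | "n = 2^Suc j - 1" using Suc.prems by linarith
  then show ?case
  proof cases
    case 1 then show ?thesis using Suc.IH by (simp add: nth_append)
  next
    case 2
    have lt: "n - 2^j < length (butlast (blk j))" using 2 by simp
    have "blk (Suc j) ! n = (butlast (blk j) @ [1 - last (blk j)]) ! (n - 2^j)"
      using 2 by (simp add: nth_append)
    also have "\<dots> = butlast (blk j) ! (n - 2^j)" using lt by (simp only: nth_append if_True)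
    also have "\<dots> = blk j ! (n - 2^j)" using 2 by (simp add: nth_butlast)
    also have "\<dots> = g (n - 2^j)" using 2 Suc.IH by simp
    also have "\<dots> = g n" using g_per[of "n - 2^j" j] 2 by simp
    finally show ?thesis .
  next
    case 3
    have ge: "\<not> n < length (blk j)" using 3 by simp
    have eq: "n - length (blk j) = length (butlast (blk j))" using 3 by simp
    have "blk (Suc j) ! n = (butlast (blk j) @ [1 - last (blk j)]) ! (n - length (blk j))"
      using ge by (simp only: blk.simps nth_append if_False)
    also have "\<dots> = 1 - last (blk j)" by (simp only: eq nth_append_length)
    finally have "blk (Suc j) ! n = 1 - g (2^j - 1)" using L by simp
    moreover have "n = 2*(2^j - 1) + 1" using 3
    proof -
      have "(1::nat) \<le> 2^j" by simp
      moreover have "n = 2 * 2^j - 1" using 3 by simp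
      ultimately show ?thesis by linarith
    qed
    ultimately show ?thesis by (metis g_odd)
  qed
qed

lemma Kinf_g: "Kinf (Suc i) = g i"
proof -
  obtain J where J: "i < 2 ^ J" using less_exp by blast
  have ev: "\<forall>\<^sub>F j in sequentially. Kseq j (Suc i) = g i"
  proof (rule eventually_sequentiallyI[of J])
    fix j assume "J \<le> j"
    then have "i < 2 ^ j" using J
      by (metis order_less_le_trans one_le_numeral power_increasing)
    then show "Kseq j (Suc i) = g i" by (simp add: Kseq_def blk_g)
  qed
  show ?thesis unfolding Kinf_def
  proof (rule the_equality)
    fix c assume "\<forall>\<^sub>F j in sequentially. Kseq j (Suc i) = c"
    then have "\<forall>\<^sub>F j in sequentially. Kseq j (Suc i) = c \<and> Kseq j (Suc i) = g i"
      using ev eventually_conj by blast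
    then obtain N where "\<forall>n\<ge>N. Kseq n (Suc i) = c \<and> Kseq n (Suc i) = g i"
      unfolding eventually_sequentially by blast
    then show "c = g i" by auto
  qed (rule ev)
qed

declare bitsum.simps[simp del]

definition T :: "nat \<Rightarrow> nat" where "T k = (\<Sum>i<k. g i)"

lemma T_double: "T (2*m) + T m = 2*m"
proof (induction m)
  case 0 then show ?case by (simp add: T_def)
next
  case (Suc m)
  have "T (2*Suc m) = T (2*m) + g (2*m) + g (2*m+1)" by (simp add: T_def)
  moreover have "g (2*m) = 1" by (simp add: g_even)
  moreover have "g (2*m+1) = 1 - g m" by (rule g_odd)
  moreover have "T (Suc m) = T m + g m" by (simp add: T_def)
  ultimately show ?case using Suc.IH g_le1[of m] by simp
qed

lemma T_bitsum: "T k mod 2 = bitsum k mod 2"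
proof (induction k rule: less_induct)
  case (less k)
  show ?case
  proof (cases "k = 0")
    case True then show ?thesis by (simp add: T_def bitsum.simps)
  next
    case False
    obtain m where m: "k = 2*m \<or> k = 2*m+1" by (metis oddE evenE)
    have mk: "m < k" using m False by auto
    have b: "bitsum k = k mod 2 + bitsum m" using False m by (subst bitsum.simps) auto
    have e: "T (2*m) mod 2 = T m mod 2" using T_double[of m] by presburger
    have o: "T (2*m+1) = T (2*m) + 1"
      by (simp add: T_def g_even)
    from m show ?thesis
    proof
      assume k: "k = 2*m"
      then have "bitsum k = bitsum m" using b by simp
      then show ?thesis using e k less.IH[OF mk] by simp
    next
      assume k: "k = 2*m+1"
      then have "bitsum k = 1 + bitsum m" using b by simp
      have h: "T (2*m) mod 2 = bitsum m mod 2" using e less.IH[OF mk] by simp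
      have "Suc (T (2*m)) mod 2 = Suc (bitsum m) mod 2"
        using mod_Suc_eq[of "T (2*m)" 2] mod_Suc_eq[of "bitsum m" 2] h by simp
      then show ?thesis using o k \<open>bitsum k = 1 + bitsum m\<close> by simp
    qed
  qed
qed

lemma tdig_T: "tdig k = T k mod 2"
proof -
  have "(\<Sum>i=1..k. Kinf i) = (\<Sum>i<k. Kinf (Suc i))"
    by (induction k) auto
  then show ?thesis by (simp add: tdig_def T_def Kinf_g)
qed

lemma bitsum_pow: "p \<ge> 1 \<Longrightarrow> bitsum (p * 2 ^ l) = bitsum p"
proof (induction l)
  case 0 then show ?case by simp
next
  case (Suc l)
  have "bitsum (p * 2 ^ Suc l) = bitsum (p * 2 ^ l)"
    using Suc.prems by (subst (1) bitsum.simps) (simp add: mult.assoc)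
  then show ?case using Suc by simp
qed

theorem proposition3:
  fixes p l k :: nat
  assumes "p \<ge> 1" and "odd p" and "k = p * 2 ^ l"
  shows "tdig k = sfun p"
  using assms by (simp add: tdig_T T_bitsum sfun_def bitsum_pow)

end
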